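(* Let $n\ge 2$, let $W(r)=(1-r^2)^2$, and let $u\in C^2(\mathbb R^n,[-1,1])$ solve $\Delta u=W'(u)$ in $\mathbb R^n$, with $\partial u/\partial x_n>0$ in $\mathbb R^n$, and satisfying the energy bound: there is $C>0$ such that $\int_{B_R}\big(\tfrac12|\nabla u|^2+W(u)\big)\,dx\le CR^{n-1}$ for every $R>1$. Let $V\subseteq{\rm C}(d_o,h_o)$ be the (support of the) associated limit varifold, as described in the context. (a) If there exists $\overline x=(0,\dots,0,\overline x_n)$ with $\overline x_n\in(0,h_o)$ and $\overline x\notin V$, then $\lim_{x_n\to+\infty}u(x',x_n)=1$ for every $x'\in\mathbb R^{n-1}$. (b) If there exists $\underline x=(0,\dots,0,\underline x_n)$ with $\underline x_n\in(-h_o,0)$ and $\underline x\notin V$, then $\lim_{x_n\to-\infty}u(x',x_n)=-1$ for every $x'\in\mathbb R^{n-1}$.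
   Context: Points of $\mathbb R^n$ are written $x=(x',x_n)\in\mathbb R^{n-1}\times\mathbb R$. For $\varepsilon>0$ set $u_\varepsilon(x):=u(x/\varepsilon)$. For $d,h>0$, ${\rm C}(d,h):=\{x: |x'|<d,\ |x_n|<h\}$; the numbers $d_o,h_o>0$ are fixed. Limit varifold: under the energy bound, by Hutchinson–Tonegawa there is a sequence $\varepsilon_j\to0^+$ such that the Radon measures $\mu_j:=\big(\tfrac{\varepsilon_j}{2}|\nabla u_{\varepsilon_j}|^2+\tfrac1{\varepsilon_j}W(u_{\varepsilon_j})\big)dx$ converge weakly-* on ${\rm C}(d_o,h_o)$ to a Radon measure $\mu$, which is (a constant multiple of) the weight of a limit varifold; $V$ denotes its support $\operatorname{supp}\mu$, a relatively closed subset of ${\rm C}(d_o,h_o)$. Along this sequence (Hutchinson–Tonegawa): $u_{\varepsilon_j}\to\pm1$ uniformly on each connected compact subset of ${\rm C}(d_o,h_o)\setminus V$; and for every open $\tilde U\Subset{\rm C}(d_o,h_o)$, every $c\in(-1,1)$ and every $\delta>0$, for all sufficiently large $j$, $\{|u_{\varepsilon_j}|\le c\}\cap\tilde U\subseteq\bigcup_{p\in V}B_\delta(p)$. *)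

theory Defs
  imports "HOL-Analysis.Analysis"
begin

text \<open>Points of R^n are modelled as pairs (x', x_n) in 'm \<times> real, where 'm is a
Euclidean space of dimension n-1 \<ge> 1 (so n \<ge> 2 automatically).\<close>

definition W :: "real \<Rightarrow> real" where
  "W r = (1 - r\<^sup>2)\<^sup>2"

definition W' :: "real \<Rightarrow> real" where
  "W' r = - 4 * r * (1 - r\<^sup>2)"

definition pderiv_dir :: "('a::euclidean_space \<Rightarrow> real) \<Rightarrow> 'a \<Rightarrow> 'a \<Rightarrow> real" where
  "pderiv_dir f b x = frechet_derivative f (at x) b"

definition C2 :: "('a::euclidean_space \<Rightarrow> real) \<Rightarrow> bool" where
  "C2 f \<longleftrightarrow> (\<forall>x. f differentiable at x)
     \<and> (\<forall>b\<in>Basis. \<forall>x. (pderiv_dir f b) differentiable at x)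
     \<and> (\<forall>b\<in>Basis. \<forall>c\<in>Basis. continuous_on UNIV (pderiv_dir (pderiv_dir f b) c))"

definition laplacian :: "('a::euclidean_space \<Rightarrow> real) \<Rightarrow> 'a \<Rightarrow> real" where
  "laplacian f x = (\<Sum>b\<in>Basis. pderiv_dir (pderiv_dir f b) b x)"

definition grad_sq :: "('a::euclidean_space \<Rightarrow> real) \<Rightarrow> 'a \<Rightarrow> real" where
  "grad_sq f x = (\<Sum>b\<in>Basis. (pderiv_dir f b x)\<^sup>2)"

definition cyl :: "real \<Rightarrow> real \<Rightarrow> ('m::euclidean_space \<times> real) set" where
  "cyl d h = {x. norm (fst x) < d \<and> \<bar>snd x\<bar> < h}"

definition resc :: "real \<Rightarrow> ('a::real_vector \<Rightarrow> real) \<Rightarrow> 'a \<Rightarrow> real" where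
  "resc eps u x = u ((1 / eps) *\<^sub>R x)"

definition edens :: "real \<Rightarrow> ('a::euclidean_space \<Rightarrow> real) \<Rightarrow> 'a \<Rightarrow> real" where
  "edens eps u x = eps / 2 * grad_sq (resc eps u) x + W (resc eps u x) / eps"

definition csupp :: "('a::topological_space \<Rightarrow> real) \<Rightarrow> 'a set" where
  "csupp \<phi> = closure {x. \<phi> x \<noteq> 0}"

definition radon_on :: "('a::euclidean_space) set \<Rightarrow> 'a measure \<Rightarrow> bool" where
  "radon_on U \<mu> \<longleftrightarrow> sets \<mu> = sets borel \<and> emeasure \<mu> (UNIV - U) = 0
     \<and> (\<forall>K. compact K \<and> K \<subseteq> U \<longrightarrow> emeasure \<mu> K < \<infinity>)"

definition weak_star_conv_on ::
  "('a::euclidean_space) set \<Rightarrow> (nat \<Rightarrow> 'a \<Rightarrow> real) \<Rightarrow> 'a measure \<Rightarrow> bool" where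
  "weak_star_conv_on U e \<mu> \<longleftrightarrow>
     (\<forall>\<phi>. continuous_on UNIV \<phi> \<and> compact (csupp \<phi>) \<and> csupp \<phi> \<subseteq> U \<longrightarrow>
        ((\<lambda>j. integral U (\<lambda>x. \<phi> x * e j x)) \<longlongrightarrow> integral\<^sup>L \<mu> \<phi>) sequentially)"

definition msupp_in :: "('a::euclidean_space) set \<Rightarrow> 'a measure \<Rightarrow> 'a set" where
  "msupp_in U \<mu> = {p \<in> U. \<forall>r>0. emeasure \<mu> (ball p r \<inter> U) > 0}"

end

theory Submission
  imports Defs
begin
lemma deriv_line:
  fixes u :: "'m::euclidean_space \<times> real \<Rightarrow> real"
  assumes "u differentiable at (x', t)"
  shows "((\<lambda>s. u (x', s)) has_real_derivative pderiv_dir u (0,1) (x', t)) (at t)"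
proof -
  let ?D = "frechet_derivative u (at (x', t))"
  have du: "(u has_derivative ?D) (at (x', t))"
    using assms frechet_derivative_works by blast
  have lin: "linear ?D" using du has_derivative_linear by blast
  have dp: "((\<lambda>s. (x', s)) has_derivative (\<lambda>h. (0, h))) (at t)"
    by (auto intro!: derivative_eq_intros)
  have "((\<lambda>s. u (x', s)) has_derivative (\<lambda>h. ?D (0, h))) (at t)"
    by (rule has_derivative_compose[OF dp du])
  moreover have "(\<lambda>h. ?D (0, h)) = (\<lambda>h. ?D (0,1) * h)"
  proof
    fix h :: real
    have "(0::'m, h) = h *\<^sub>R (0, 1)" by simp
    then have "?D (0,h) = h *\<^sub>R ?D (0,1)" using linear_scale[OF lin] by metis
    then show "?D (0, h) = ?D (0,1) * h" by simp
  qed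
  ultimately show ?thesis unfolding has_field_derivative_def pderiv_dir_def by simp
qed

lemma cyl_open: "open (cyl d h :: ('m::euclidean_space \<times> real) set)"
  unfolding cyl_def
  by (intro open_Collect_conj open_Collect_less continuous_intros)

lemma key:
  fixes u :: "'m::euclidean_space \<times> real \<Rightarrow> real"
    and \<mu> :: "('m \<times> real) measure" and V :: "('m \<times> real) set" and t :: real
  assumes sets: "sets \<mu> = sets borel"
    and eps_pos: "\<forall>j. eps j > 0"
    and eps_lim: "eps \<longlonglongrightarrow> 0"
    and V_def: "V = msupp_in (cyl d h) \<mu>"
    and HT1: "\<forall>K. compact K \<and> connected K \<and> K \<subseteq> cyl d h - V \<longrightarrow>
               (\<exists>s\<in>{-1, 1::real}. \<forall>e>0. \<forall>\<^sub>F j in sequentially.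
                   \<forall>x\<in>K. \<bar>resc (eps j) u x - s\<bar> < e)"
    and inC: "(0::'m, t) \<in> cyl d h" and notV: "(0, t) \<notin> V"
  shows "\<exists>s\<in>{-1,1::real}. \<forall>x'. (\<lambda>j. u (x', t / eps j)) \<longlonglongrightarrow> s"
proof -
  let ?C = "cyl d h :: ('m \<times> real) set"
  have oC: "open ?C" by (rule cyl_open)
  have "\<not> (\<forall>r>0. 0 < emeasure \<mu> (ball (0,t) r \<inter> ?C))"
    using notV inC unfolding V_def msupp_in_def by simp
  then obtain r where r: "r > 0" "\<not> emeasure \<mu> (ball (0,t) r \<inter> ?C) > 0"
    by blast
  have r0: "emeasure \<mu> (ball (0,t) r \<inter> ?C) = 0" using r(2) by (simp add: not_gr_zero)
  obtain r1 where r1: "r1 > 0" "cball (0,t) r1 \<subseteq> ?C"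
    using oC inC open_contains_cball by blast
  define r2 where "r2 = min r1 (r/2)"
  have r2: "r2 > 0" "cball (0,t) r2 \<subseteq> ?C" "r2 \<le> r/2"
    using r1 r unfolding r2_def by auto
  let ?K = "cball (0::'m, t) r2"
  have KV: "?K \<subseteq> ?C - V"
  proof
    fix q assume q: "q \<in> ?K"
    have qC: "q \<in> ?C" using q r2 by auto
    have sub: "ball q (r/2) \<inter> ?C \<subseteq> ball (0,t) r \<inter> ?C"
    proof
      fix z assume z: "z \<in> ball q (r/2) \<inter> ?C"
      have "dist (0,t) z \<le> dist (0,t) q + dist q z" by (rule dist_triangle)
      also have "\<dots> < r" using q z r2 by (auto simp: dist_commute)
      finally show "z \<in> ball (0,t) r \<inter> ?C" using z by auto
    qed
    have meas: "ball (0,t) r \<inter> ?C \<in> sets \<mu>" using sets oC by auto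
    have "emeasure \<mu> (ball q (r/2) \<inter> ?C) \<le> emeasure \<mu> (ball (0,t) r \<inter> ?C)"
      by (rule emeasure_mono[OF sub meas])
    then have "emeasure \<mu> (ball q (r/2) \<inter> ?C) = 0" using r0 by simp
    then have "q \<notin> V" using r unfolding V_def msupp_in_def
      by (metis (no_types, lifting) half_gt_zero less_irrefl mem_Collect_eq)
    then show "q \<in> ?C - V" using qC by auto
  qed
  obtain s where s: "s \<in> {-1,1::real}" and conv: "\<forall>e>0. \<forall>\<^sub>F j in sequentially.
                   \<forall>x\<in>?K. \<bar>resc (eps j) u x - s\<bar> < e"
    using HT1 KV by (meson compact_cball connected_cball)
  have "\<forall>x'. (\<lambda>j. u (x', t / eps j)) \<longlonglongrightarrow> s"
  proof
    fix x' :: 'm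
    have "(\<lambda>j. eps j * norm x') \<longlonglongrightarrow> 0 * norm x'"
      by (intro tendsto_intros eps_lim)
    then have ev1: "\<forall>\<^sub>F j in sequentially. eps j * norm x' < r2"
      using r2 by (auto dest: order_tendstoD(2))
    show "(\<lambda>j. u (x', t / eps j)) \<longlonglongrightarrow> s"
    proof (rule tendstoI)
      fix e :: real assume e: "e > 0"
      have ev2: "\<forall>\<^sub>F j in sequentially. \<forall>x\<in>?K. \<bar>resc (eps j) u x - s\<bar> < e"
        using conv e by blast
      show "\<forall>\<^sub>F j in sequentially. dist (u (x', t / eps j)) s < e"
        using ev1 ev2
      proof eventually_elim
        case (elim j)
        have ej: "eps j > 0" using eps_pos by auto
        have "(eps j *\<^sub>R x', t) \<in> ?K"
          using elim(1) ej by (simp add: dist_Pair_Pair dist_norm)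
        then have "\<bar>resc (eps j) u (eps j *\<^sub>R x', t) - s\<bar> < e" using elim(2) by blast
        moreover have "resc (eps j) u (eps j *\<^sub>R x', t) = u (x', t / eps j)"
          using ej by (simp add: resc_def)
        ultimately show ?case by (simp add: dist_real_def)
      qed
    qed
  qed
  then show ?thesis using s by blast
qed

lemma core_top:
  fixes g :: "real \<Rightarrow> real" and y :: "nat \<Rightarrow> real"
  assumes sm: "\<And>a b. a < b \<Longrightarrow> g a < g b" and bd: "\<And>x. g x \<le> 1" "\<And>x. g x \<ge> -1"
    and y: "filterlim y at_top sequentially" and lim: "(\<lambda>j. g (y j)) \<longlonglongrightarrow> s"
    and s: "s \<in> {-1,1}"
  shows "(g \<longlongrightarrow> 1) at_top"
proof -
  have "\<forall>\<^sub>F j in sequentially. y j \<ge> 1" using y by (simp add: filterlim_at_top)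
  then have "\<forall>\<^sub>F j in sequentially. g (y j) \<ge> g 1"
    by eventually_elim (metis sm order_le_less order_less_imp_le)
  then have "s \<ge> g 1" using lim by (intro tendsto_lowerbound) auto
  moreover have "g 1 > g 0" using sm by simp
  ultimately have s1: "s = 1" using s bd(2)[of 0] by auto
  show ?thesis
  proof (rule order_tendstoI)
    fix a :: real assume a: "a < 1"
    have "\<forall>\<^sub>F j in sequentially. g (y j) > a" using lim a s1 by (auto dest: order_tendstoD(1))
    then obtain j where j: "g (y j) > a" by (meson eventually_sequentially order_refl)
    show "\<forall>\<^sub>F x in at_top. a < g x"
      unfolding eventually_at_top_linorder
      by (rule exI[of _ "y j"]) (metis j sm order_le_less order_less_trans)
  next
    fix b :: real assume "b > 1"
    then show "\<forall>\<^sub>F x in at_top. g x < b" using bd(1) by (intro always_eventually allI) (metis order_le_less_trans)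
  qed
qed

lemma core_bot:
  fixes g :: "real \<Rightarrow> real" and y :: "nat \<Rightarrow> real"
  assumes sm: "\<And>a b. a < b \<Longrightarrow> g a < g b" and bd: "\<And>x. g x \<le> 1" "\<And>x. g x \<ge> -1"
    and y: "filterlim y at_bot sequentially" and lim: "(\<lambda>j. g (y j)) \<longlonglongrightarrow> s"
    and s: "s \<in> {-1,1}"
  shows "(g \<longlongrightarrow> -1) at_bot"
proof -
  have "\<forall>\<^sub>F j in sequentially. y j \<le> -1" using y by (simp add: filterlim_at_bot)
  then have "\<forall>\<^sub>F j in sequentially. g (y j) \<le> g (-1)"
    by eventually_elim (metis sm order_le_less order_less_imp_le)
  then have "s \<le> g (-1)" using lim by (intro tendsto_upperbound) auto
  moreover have "g (-1) < g 0" using sm by simp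
  ultimately have s1: "s = -1" using s bd(1)[of 0] by auto
  show ?thesis
  proof (rule order_tendstoI)
    fix a :: real assume a: "a > -1"
    have "\<forall>\<^sub>F j in sequentially. g (y j) < a" using lim a s1 by (auto dest: order_tendstoD(2))
    then obtain j where j: "g (y j) < a" by (meson eventually_sequentially order_refl)
    show "\<forall>\<^sub>F x in at_bot. g x < a"
      unfolding eventually_at_bot_linorder
      by (rule exI[of _ "y j"]) (metis j sm order_le_less order_le_less_trans)
  next
    fix b :: real assume "b < -1"
    then show "\<forall>\<^sub>F x in at_bot. b < g x" using bd(2) by (intro always_eventually allI) (metis order_less_le_trans)
  qed
qed

lemma inv_eps_top:
  assumes eps_pos: "\<forall>j. eps j > 0" and eps_lim: "eps \<longlonglongrightarrow> 0"
  shows "filterlim (\<lambda>j. inverse (eps j :: real)) at_top sequentially"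
proof -
  have "filterlim eps (at_right 0) sequentially"
    using eps_lim eps_pos by (intro tendsto_imp_filterlim_at_right) auto
  then show ?thesis using filterlim_inverse_at_top_right filterlim_compose by blast
qed


theorem lemma3p1:
  fixes u :: "'m::euclidean_space \<times> real \<Rightarrow> real"
    and d\<^sub>o h\<^sub>o :: real
    and eps :: "nat \<Rightarrow> real"
    and \<mu> :: "('m \<times> real) measure"
    and V :: "('m \<times> real) set"
  assumes dh: "d\<^sub>o > 0" "h\<^sub>o > 0"
    and C2u: "C2 u"
    and range: "\<forall>x. u x \<in> {-1..1}"
    and pde: "\<forall>x. laplacian u x = W' (u x)"
    and mono: "\<forall>x. pderiv_dir u (0, 1) x > 0"
    and energy: "\<exists>C>0. \<forall>R>1. integral (ball 0 R) (\<lambda>x. grad_sq u x / 2 + W (u x))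
                              \<le> C * R ^ (DIM('m \<times> real) - 1)"
    and eps_pos: "\<forall>j. eps j > 0"
    and eps_lim: "eps \<longlonglongrightarrow> 0"
    and radon: "radon_on (cyl d\<^sub>o h\<^sub>o) \<mu>"
    and conv: "weak_star_conv_on (cyl d\<^sub>o h\<^sub>o) (\<lambda>j. edens (eps j) u) \<mu>"
    and V_def: "V = msupp_in (cyl d\<^sub>o h\<^sub>o) \<mu>"
    and HT1: "\<forall>K. compact K \<and> connected K \<and> K \<subseteq> cyl d\<^sub>o h\<^sub>o - V \<longrightarrow>
               (\<exists>s\<in>{-1, 1::real}. \<forall>e>0. \<forall>\<^sub>F j in sequentially.
                   \<forall>x\<in>K. \<bar>resc (eps j) u x - s\<bar> < e)"
    and HT2: "\<forall>U c \<delta>. open U \<and> compact (closure U) \<and> closure U \<subseteq> cyl d\<^sub>o h\<^sub>o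
               \<and> -1 < c \<and> c < 1 \<and> \<delta> > 0 \<longrightarrow>
               (\<forall>\<^sub>F j in sequentially.
                  {x \<in> U. \<bar>resc (eps j) u x\<bar> \<le> c} \<subseteq> (\<Union>p\<in>V. ball p \<delta>))"
  shows "((\<exists>t. 0 < t \<and> t < h\<^sub>o \<and> (0, t) \<notin> V) \<longrightarrow>
            (\<forall>x'. ((\<lambda>t. u (x', t)) \<longlongrightarrow> 1) at_top))
       \<and> ((\<exists>t. - h\<^sub>o < t \<and> t < 0 \<and> (0, t) \<notin> V) \<longrightarrow>
            (\<forall>x'. ((\<lambda>t. u (x', t)) \<longlongrightarrow> -1) at_bot))"
proof -
  have sets: "sets \<mu> = sets borel" using radon unfolding radon_on_def by blast
  have sm: "\<And>x' a b. a < b \<Longrightarrow> u (x', a) < u (x', b)"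
  proof -
    fix x' a b assume ab: "(a::real) < b"
    show "u (x', a) < u (x', b)"
    proof (rule DERIV_pos_imp_increasing[OF ab, where f = "\<lambda>s. u (x', s)"])
      fix x assume "a \<le> x" "x \<le> b"
      have "u differentiable at (x', x)" using C2u unfolding C2_def by blast
      then show "\<exists>y. ((\<lambda>s. u (x', s)) has_real_derivative y) (at x) \<and> y > 0"
        using deriv_line mono by blast
    qed
  qed
  have bd1: "\<And>x. u x \<le> 1" and bd2: "\<And>x. u x \<ge> -1" using range by auto
  have inv: "filterlim (\<lambda>j. inverse (eps j)) at_top sequentially"
    by (rule inv_eps_top[OF eps_pos eps_lim])
  show ?thesis
  proof (intro conjI impI allI)
    fix x'
    assume "\<exists>t. 0 < t \<and> t < h\<^sub>o \<and> (0, t) \<notin> V"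
    then obtain t where t: "0 < t" "t < h\<^sub>o" "(0, t) \<notin> V" by blast
    have inC: "(0::'m, t) \<in> cyl d\<^sub>o h\<^sub>o" using t dh unfolding cyl_def by auto
    obtain s where s: "s \<in> {-1,1::real}" "\<forall>x'. (\<lambda>j. u (x', t / eps j)) \<longlonglongrightarrow> s"
      using key[OF sets eps_pos eps_lim V_def HT1 inC t(3)] by blast
    have y: "filterlim (\<lambda>j. t / eps j) at_top sequentially"
      using filterlim_tendsto_pos_mult_at_top[OF tendsto_const t(1) inv]
      by (simp add: divide_inverse)
    show "((\<lambda>t. u (x', t)) \<longlongrightarrow> 1) at_top"
      by (rule core_top[OF sm bd1 bd2 y s(2)[rule_format, of x'] s(1)])
  next
    fix x'
    assume "\<exists>t. - h\<^sub>o < t \<and> t < 0 \<and> (0, t) \<notin> V"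
    then obtain t where t: "- h\<^sub>o < t" "t < 0" "(0, t) \<notin> V" by blast
    have inC: "(0::'m, t) \<in> cyl d\<^sub>o h\<^sub>o" using t dh unfolding cyl_def by auto
    obtain s where s: "s \<in> {-1,1::real}" "\<forall>x'. (\<lambda>j. u (x', t / eps j)) \<longlonglongrightarrow> s"
      using key[OF sets eps_pos eps_lim V_def HT1 inC t(3)] by blast
    have y: "filterlim (\<lambda>j. t / eps j) at_bot sequentially"
      using filterlim_tendsto_neg_mult_at_bot[OF tendsto_const t(2) inv]
      by (simp add: divide_inverse)
    show "((\<lambda>t. u (x', t)) \<longlongrightarrow> -1) at_bot"
      by (rule core_bot[OF sm bd1 bd2 y s(2)[rule_format, of x'] s(1)])
  qed
qed

end
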